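(* Let $p\ge 1/2$ be fixed and let $\epsilon>0$ be an arbitrarily small constant. In the Majority Model (MM) on the cycle $C_n$ started from a $p$-random initial coloring, with probability $1-o(1)$ as $n\to\infty$ the process reaches, within $\mathcal{O}(\log n)$ rounds, a stable coloring whose number of blue nodes is between $(1-\epsilon)\frac{2p^2-p^3}{1-p+p^2}n$ and $(1+\epsilon)\frac{2p^2-p^3}{1-p+p^2}n$.
   Context: A coloring is a map from the nodes to $\{b,w\}$. In MM, all nodes update simultaneously: a node adopts the color strictly more frequent among its neighbors in the previous round and keeps its color in case of a tie. A coloring is stable if one application of the update rule returns it unchanged. A $p$-random coloring colors each node blue independently with probability $p$ and white otherwise. *)

theory Defs
  imports "HOL-Probability.Probability"
begin

text \<open>Colorings of the cycle C_n with nodes 0..n-1: True = blue (b), False = white (w).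
  Values outside {0..<n} are irrelevant and left unchanged by the dynamics.\<close>

definition cycle_nbrs :: "nat \<Rightarrow> nat \<Rightarrow> nat set" where
  "cycle_nbrs n i = {(i + 1) mod n, (i + n - 1) mod n}"

definition mm_step :: "nat \<Rightarrow> (nat \<Rightarrow> bool) \<Rightarrow> (nat \<Rightarrow> bool)" where
  "mm_step n c i =
     (if i < n then
        (let nb = card {j \<in> cycle_nbrs n i. c j};
             nw = card {j \<in> cycle_nbrs n i. \<not> c j}
         in if nb > nw then True else if nw > nb then False else c i)
      else c i)"

definition mm_stable :: "nat \<Rightarrow> (nat \<Rightarrow> bool) \<Rightarrow> bool" where
  "mm_stable n c \<longleftrightarrow> (\<forall>i<n. mm_step n c i = c i)"

definition num_blue :: "nat \<Rightarrow> (nat \<Rightarrow> bool) \<Rightarrow> nat" where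
  "num_blue n c = card {i. i < n \<and> c i}"

definition random_coloring :: "real \<Rightarrow> nat \<Rightarrow> (nat \<Rightarrow> bool) pmf" where
  "random_coloring p n = Pi_pmf {..<n} False (\<lambda>_. bernoulli_pmf p)"

end

theory Submission
  imports Defs "HOL-Real_Asymp.Real_Asymp"
begin

definition S :: "(int \<Rightarrow> bool) \<Rightarrow> int \<Rightarrow> bool" where
  "S x z = (if x (z-1) = x (z+1) then x (z+1) else x z)"

definition altw :: "(int \<Rightarrow> bool) \<Rightarrow> int \<Rightarrow> nat \<Rightarrow> bool" where
  "altw x z l = (\<forall>k<l. x (z - int k) \<noteq> x (z - int k - 1) \<and> x (z + int k) \<noteq> x (z + int k + 1))"

lemma altw_1: "altw x z (Suc 0) \<longleftrightarrow> x z \<noteq> x (z - 1) \<and> x z \<noteq> x (z+1)"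
  by (auto simp: altw_def)

lemma altw_mono: "altw x z l \<Longrightarrow> k \<le> l \<Longrightarrow> altw x z k"
  by (auto simp: altw_def)

lemma altw_Suc: "altw x z (Suc l) \<longleftrightarrow> altw x z l \<and> x (z - int l) \<noteq> x (z - int l - 1) \<and> x (z + int l) \<noteq> x (z + int l + 1)"
  by (auto simp: altw_def less_Suc_eq)

lemma S_flip: "S x w \<noteq> x w \<longleftrightarrow> x (w-1) \<noteq> x w \<and> x (w+1) \<noteq> x w"
  by (auto simp: S_def)

lemma S_pair: "x z = x (z+1) \<Longrightarrow> S x z = x z \<and> S x (z+1) = x (z+1)"
  unfolding S_def by (auto simp: algebra_simps)

lemma stable_stays: "\<not> altw x z 1 \<Longrightarrow> S x z = x z \<and> \<not> altw (S x) z 1"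
proof -
  assume a: "\<not> altw x z 1"
  then have "x z = x (z-1) \<or> x z = x (z+1)" by (simp add: altw_1)
  then show ?thesis
  proof
    assume h: "x z = x (z-1)"
    have "S x (z-1) = x (z-1) \<and> S x (z-1+1) = x (z-1+1)" by (rule S_pair) (use h in simp)
    then show ?thesis using h by (simp add: altw_1)
  next
    assume h: "x z = x (z+1)"
    have "S x z = x z \<and> S x (z+1) = x (z+1)" by (rule S_pair) (use h in simp)
    then show ?thesis using h by (simp add: altw_1)
  qed
qed

lemma altw_flip_left: "altw x z (Suc l) \<Longrightarrow> j \<le> l \<Longrightarrow> S x (z - int j) = (\<not> x (z - int j))"
proof -
  assume a: "altw x z (Suc l)" "j \<le> l"
  have 1: "x (z - int j) \<noteq> x (z - int j - 1)" using a by (auto simp: altw_def)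
  have 2: "x (z - int j) \<noteq> x (z - int j + 1)"
  proof (cases j)
    case 0 then show ?thesis using a by (auto simp: altw_def)
  next
    case (Suc j') 
    then have "x (z - int j') \<noteq> x (z - int j' - 1)" using a by (auto simp: altw_def)
    then show ?thesis using Suc by (auto simp: algebra_simps)
  qed
  show ?thesis using 1 2 S_flip[of x "z - int j"] by auto
qed

lemma altw_flip_right: "altw x z (Suc l) \<Longrightarrow> j \<le> l \<Longrightarrow> S x (z + int j) = (\<not> x (z + int j))"
proof -
  assume a: "altw x z (Suc l)" "j \<le> l"
  have 1: "x (z + int j) \<noteq> x (z + int j + 1)" using a by (auto simp: altw_def)
  have 2: "x (z + int j) \<noteq> x (z + int j - 1)"
  proof (cases j)
    case 0 then show ?thesis using a by (auto simp: altw_def)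
  next
    case (Suc j') 
    then have "x (z + int j') \<noteq> x (z + int j' + 1)" using a by (auto simp: altw_def)
    then show ?thesis using Suc by (auto simp: algebra_simps)
  qed
  show ?thesis using 1 2 S_flip[of x "z + int j"] by auto
qed

lemma altw_shift1: "altw x z (Suc l) \<Longrightarrow> altw (S x) z l"
proof -
  assume a: "altw x z (Suc l)"
  show ?thesis unfolding altw_def
  proof (intro allI impI)
    fix k assume k: "k < l"
    have e1: "z - int k - 1 = z - int (Suc k)" "z + int k + 1 = z + int (Suc k)" by auto
    have "S x (z - int k) = (\<not> x (z - int k))" "S x (z - int (Suc k)) = (\<not> x (z - int (Suc k)))"
         "S x (z + int k) = (\<not> x (z + int k))" "S x (z + int (Suc k)) = (\<not> x (z + int (Suc k)))"
      using k altw_flip_left[OF a, of k] altw_flip_left[OF a, of "Suc k"]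
        altw_flip_right[OF a, of k] altw_flip_right[OF a, of "Suc k"] by auto
    moreover have "x (z - int k) \<noteq> x (z - int (Suc k))" "x (z + int k) \<noteq> x (z + int (Suc k))"
      using a k e1 unfolding altw_def by (metis less_SucI)+
    ultimately show "S x (z - int k) \<noteq> S x (z - int k - 1) \<and> S x (z + int k) \<noteq> S x (z + int k + 1)"
      unfolding e1 by auto
  qed
qed

lemma altw_shift2: "altw x z 1 \<Longrightarrow> altw (S x) z l \<Longrightarrow> altw x z (Suc l)"
proof (induction l)
  case 0 then show ?case by simp
next
  case (Suc l)
  have IH: "altw x z (Suc l)" using Suc altw_mono[of "S x" z "Suc l" l] by auto
  have fl: "S x (z - int l) = (\<not> x (z - int l))" "S x (z + int l) = (\<not> x (z + int l))"
    using altw_flip_left[OF IH order_refl] altw_flip_right[OF IH order_refl] by auto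
  have i1: "x (z - int l) \<noteq> x (z - int l - 1)" "x (z + int l) \<noteq> x (z + int l + 1)"
    using IH by (auto simp: altw_def)
  have s: "S x (z - int l) \<noteq> S x (z - int l - 1)" "S x (z + int l) \<noteq> S x (z + int l + 1)"
    using Suc.prems(2) by (auto simp: altw_def)
  have f2: "S x (z - int l - 1) \<noteq> x (z - int l - 1)" "S x (z + int l + 1) \<noteq> x (z + int l + 1)"
    using fl i1 s by auto
  have "x (z - int l - 1 - 1) \<noteq> x (z - int l - 1)" "x (z + int l + 1 + 1) \<noteq> x (z + int l + 1)"
    using f2 S_flip by blast+
  then have "x (z - int (Suc l)) \<noteq> x (z - int (Suc l) - 1) \<and> x (z + int (Suc l)) \<noteq> x (z + int (Suc l) + 1)"
    by (auto simp: algebra_simps)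
  then show ?case using IH altw_Suc[of x z "Suc l"] by blast
qed

lemma altw_shift: "altw x z 1 \<Longrightarrow> altw (S x) z l \<longleftrightarrow> altw x z (Suc l)"
  using altw_shift1 altw_shift2 by blast

fun dep :: "(int \<Rightarrow> bool) \<Rightarrow> int \<Rightarrow> nat \<Rightarrow> nat" where
  "dep x z 0 = 0"
| "dep x z (Suc t) = (if altw x z 1 then Suc (dep (S x) z t) else 0)"

lemma dep_stable: "\<not> altw x z 1 \<Longrightarrow> dep x z t = 0"
  by (cases t) auto

lemma S_iter: "(S ^^ t) x z = (x z \<noteq> odd (dep x z t))"
proof (induction t arbitrary: x)
  case 0 then show ?case by simp
next
  case (Suc t)
  have "(S ^^ Suc t) x z = (S ^^ t) (S x) z" by (simp only: funpow_Suc_right o_apply)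
  also have "\<dots> = (S x z \<noteq> odd (dep (S x) z t))" by (rule Suc.IH)
  finally have eq: "(S ^^ Suc t) x z = (S x z \<noteq> odd (dep (S x) z t))" .
  show ?case
  proof (cases "altw x z 1")
    case True
    then have "S x z = (\<not> x z)" using altw_flip_left[of x z 0 0] by simp
    then show ?thesis using True eq by simp
  next
    case False
    then show ?thesis using stable_stays[OF False] dep_stable[of "S x" z t] eq by simp
  qed
qed

lemma dep_ge: "l \<le> dep x z t \<longleftrightarrow> l \<le> t \<and> altw x z l"
proof (induction t arbitrary: x l)
  case 0 then show ?case by (auto simp: altw_def)
next
  case (Suc t)
  show ?case
  proof (cases "altw x z 1")
    case True
    show ?thesis
    proof (cases l)
      case 0 then show ?thesis by (simp add: altw_def)
    next
      case (Suc l')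
      then show ?thesis using True Suc.IH[where x="S x" and l=l'] altw_shift[OF True, of l'] by simp
    qed
  next
    case False
    have "altw x z 0" by (simp add: altw_def)
    then show ?thesis using False altw_mono[of x z l 1] by (cases l) auto
  qed
qed

lemma dep_le: "dep x z t \<le> t"
  using dep_ge[of "dep x z t" x z t] by simp

lemma dep_Suc: "dep x z (Suc t) = (if altw x z (Suc t) then Suc t else dep x z t)"
proof (cases "altw x z (Suc t)")
  case True
  then have "Suc t \<le> dep x z (Suc t)" using dep_ge[of "Suc t" x z "Suc t"] by (simp del: dep.simps)
  then show ?thesis using True dep_le[of x z "Suc t"] by simp
next
  case False
  have "\<forall>l. l \<le> dep x z (Suc t) \<longleftrightarrow> l \<le> dep x z t"
  proof
    fix l
    show "l \<le> dep x z (Suc t) \<longleftrightarrow> l \<le> dep x z t"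
      using dep_ge[of l x z "Suc t"] dep_ge[of l x z t] False by (auto simp: le_Suc_eq)
  qed
  then show ?thesis using False by (metis le_antisym order_refl)
qed

lemma S_iter_Suc: "(S ^^ Suc t) x z = ((S ^^ t) x z \<noteq> altw x z (Suc t))"
  using dep_Suc[of x z t] S_iter[of t x z] S_iter[of "Suc t" x z] dep_ge[of t x z t] dep_le[of x z t]
    altw_mono[of x z "Suc t" t]
  by (cases "altw x z (Suc t)") (auto simp del: dep.simps funpow.simps)

lemma S_iter_alt: "altw x z (Suc t) \<Longrightarrow> (S ^^ t) x z = (x z \<noteq> odd t)"
  using S_iter[of t x z] dep_ge[of t x z t] dep_le[of x z t] altw_mono[of x z "Suc t" t] by simp

lemma unstable_back: "altw ((S ^^ t) x) z 1 \<Longrightarrow> altw x z (Suc t)"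
proof (induction t arbitrary: x)
  case 0 then show ?case by simp
next
  case (Suc t)
  have "(S ^^ Suc t) x = (S ^^ t) (S x)" by (simp only: funpow_Suc_right o_apply)
  then have "altw (S x) z (Suc t)" using Suc by simp
  moreover have "altw x z 1"
  proof (rule ccontr)
    assume "\<not> altw x z 1"
    then have "\<not> altw (S x) z 1" using stable_stays by blast
    then show False using \<open>altw (S x) z (Suc t)\<close> altw_mono[of "S x" z "Suc t" 1] by simp
  qed
  ultimately show ?case using altw_shift by blast
qed

lemma S_local: "(\<forall>w. \<bar>w - z\<bar> \<le> int t \<longrightarrow> x w = y w) \<Longrightarrow> (S ^^ t) x z = (S ^^ t) y z"
proof (induction t arbitrary: z)
  case 0 then show ?case by simp
next
  case (Suc t)
  have h: "\<And>d. \<bar>d\<bar> \<le> 1 \<Longrightarrow> (S ^^ t) x (z + d) = (S ^^ t) y (z + d)"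
    by (rule Suc.IH) (use Suc.prems in auto)
  have "(S ^^ t) x (z-1) = (S ^^ t) y (z-1)" "(S ^^ t) x (z+1) = (S ^^ t) y (z+1)" "(S ^^ t) x z = (S ^^ t) y z"
    using h[of "-1"] h[of 1] h[of 0] by auto
  moreover have "(S ^^ Suc t) x z = S ((S ^^ t) x) z" "(S ^^ Suc t) y z = S ((S ^^ t) y) z" by simp_all
  ultimately show ?case unfolding S_def by presburger
qed


definition nd :: "nat \<Rightarrow> int \<Rightarrow> nat" where "nd n z = nat (z mod int n)"
definition lift :: "nat \<Rightarrow> (nat \<Rightarrow> bool) \<Rightarrow> int \<Rightarrow> bool" where "lift n c = (\<lambda>z. c (nd n z))"

lemma nd_lt: "n > 0 \<Longrightarrow> nd n z < n"
  unfolding nd_def by (simp add: nat_less_iff)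

lemma nd_int: "i < n \<Longrightarrow> nd n (int i) = i"
  unfolding nd_def by (simp add: of_nat_mod[symmetric] del: of_nat_mod)

lemma int_nd: "n > 0 \<Longrightarrow> int (nd n z) = z mod int n"
  unfolding nd_def by simp

lemma nd_eq_iff: "n > 0 \<Longrightarrow> nd n a = nd n b \<longleftrightarrow> a mod int n = b mod int n"
proof -
  assume n: "n > 0"
  have "nd n a = nd n b \<longleftrightarrow> int (nd n a) = int (nd n b)" by simp
  then show ?thesis using int_nd[OF n] by simp
qed

lemma nd_plus1: "n > 0 \<Longrightarrow> (nd n z + 1) mod n = nd n (z + 1)"
proof -
  assume n: "n > 0"
  have "int ((nd n z + 1) mod n) = (z mod int n + 1) mod int n"
    using n by (simp add: int_nd of_nat_mod ac_simps)
  also have "\<dots> = (z + 1) mod int n" by (metis mod_add_left_eq)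
  finally show ?thesis using int_nd[OF n, of "z+1"] by linarith
qed

lemma nd_minus1: "n > 0 \<Longrightarrow> (nd n z + n - 1) mod n = nd n (z - 1)"
proof -
  assume n: "n > 0"
  have "int ((nd n z + n - 1) mod n) = (z mod int n + int n - 1) mod int n"
    using n by (simp add: int_nd of_nat_mod of_nat_diff)
  also have "\<dots> = (z - 1) mod int n"
    by (metis add.commute add_diff_eq mod_add_left_eq mod_add_self1)
  finally show ?thesis using int_nd[OF n, of "z-1"] by linarith
qed

lemma nd_pm_distinct: "n \<ge> 3 \<Longrightarrow> nd n (z + 1) \<noteq> nd n (z - 1)"
proof
  assume n: "n \<ge> 3" and e: "nd n (z + 1) = nd n (z - 1)"
  then have "(z + 1) mod int n = (z - 1) mod int n" using nd_eq_iff[of n] by simp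
  then have "int n dvd (z + 1) - (z - 1)" by (simp add: mod_eq_dvd_iff)
  then have "int n dvd 2" by simp
  then have "n dvd 2" by (metis of_nat_dvd_iff of_nat_numeral)
  then have "n \<le> 2" by (simp add: dvd_imp_le)
  then show False using n by simp
qed

lemma card_two: "a \<noteq> b \<Longrightarrow> card {j \<in> {a, b}. P j} = (if P a then 1 else 0) + (if P b then 1 else 0)"
proof (cases "P a"; cases "P b")
  assume "a \<noteq> b" "P a" "P b"
  then have "{j \<in> {a, b}. P j} = {a, b}" by auto
  then show ?thesis using \<open>a \<noteq> b\<close> \<open>P a\<close> \<open>P b\<close> by simp
next
  assume "a \<noteq> b" "P a" "\<not> P b"
  then have "{j \<in> {a, b}. P j} = {a}" by auto
  then show ?thesis using \<open>P a\<close> \<open>\<not> P b\<close> by simp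
next
  assume "a \<noteq> b" "\<not> P a" "P b"
  then have "{j \<in> {a, b}. P j} = {b}" by auto
  then show ?thesis using \<open>\<not> P a\<close> \<open>P b\<close> by simp
next
  assume "a \<noteq> b" "\<not> P a" "\<not> P b"
  then have "{j \<in> {a, b}. P j} = {}" by auto
  then show ?thesis using \<open>\<not> P a\<close> \<open>\<not> P b\<close> by simp
qed

lemma mm_step_lift: "n \<ge> 3 \<Longrightarrow> lift n (mm_step n c) = S (lift n c)"
proof
  fix z assume n: "n \<ge> 3"
  let ?i = "nd n z"
  have n0: "n > 0" using n by simp
  have lt: "?i < n" using nd_lt[OF n0] .
  have nb: "cycle_nbrs n ?i = {nd n (z+1), nd n (z-1)}"
    unfolding cycle_nbrs_def using nd_plus1[OF n0] nd_minus1[OF n0] by simp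
  have d: "nd n (z+1) \<noteq> nd n (z-1)" using nd_pm_distinct[OF n] .
  have c1: "card {j \<in> cycle_nbrs n ?i. c j} = (if c (nd n (z+1)) then 1 else 0) + (if c (nd n (z-1)) then 1 else 0)"
    unfolding nb by (rule card_two[OF d])
  have c2: "card {j \<in> cycle_nbrs n ?i. \<not> c j} = (if c (nd n (z+1)) then 0 else 1) + (if c (nd n (z-1)) then 0 else 1)"
    unfolding nb using card_two[OF d, of "\<lambda>j. \<not> c j"] by simp
  show "lift n (mm_step n c) z = S (lift n c) z"
    unfolding lift_def mm_step_def S_def Let_def c1 c2 using lt
    by (cases "c (nd n (z+1))"; cases "c (nd n (z-1))"; simp)
qed

lemma mm_iter_lift: "n \<ge> 3 \<Longrightarrow> lift n ((mm_step n ^^ t) c) = (S ^^ t) (lift n c)"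
  by (induction t) (auto simp: mm_step_lift)

lemma mm_iter_val: "n \<ge> 3 \<Longrightarrow> i < n \<Longrightarrow> (mm_step n ^^ t) c i = (S ^^ t) (lift n c) (int i)"
proof -
  assume n: "n \<ge> 3" and i: "i < n"
  have "(mm_step n ^^ t) c i = lift n ((mm_step n ^^ t) c) (int i)" unfolding lift_def using nd_int[OF i] by simp
  then show ?thesis using mm_iter_lift[OF n] by simp
qed

lemma mm_stable_lift:
  assumes n: "n \<ge> 3" and h: "\<forall>i<n. \<not> altw (lift n c) (int i) 1"
  shows "mm_stable n c"
  unfolding mm_stable_def
proof (intro allI impI)
  fix i assume i: "i < n"
  have "mm_step n c i = lift n (mm_step n c) (int i)" unfolding lift_def using nd_int[OF i] by simp
  also have "\<dots> = S (lift n c) (int i)" using mm_step_lift[OF n] by simp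
  also have "\<dots> = lift n c (int i)" using stable_stays h i by blast
  also have "\<dots> = c i" unfolding lift_def using nd_int[OF i] by simp
  finally show "mm_step n c i = c i" .
qed

lemma mm_stable_final:
  assumes n: "n \<ge> 3" and h: "\<forall>i<n. \<not> altw (lift n c) (int i) (Suc t)"
  shows "mm_stable n ((mm_step n ^^ t) c)"
  apply (rule mm_stable_lift[OF n])
  using h unstable_back mm_iter_lift[OF n] by metis

lemma num_blue_iter: "n \<ge> 3 \<Longrightarrow> num_blue n ((mm_step n ^^ t) c) = card {i. i < n \<and> (S ^^ t) (lift n c) (int i)}"
  unfolding num_blue_def using mm_iter_val by (metis (lifting))


lemma pair_prob:
  "measure_pmf.prob (pair_pmf A B) (E1 \<times> E2) = measure_pmf.prob A E1 * measure_pmf.prob B E2"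
proof -
  have "measure_pmf.prob (pair_pmf A B) (E1 \<times> E2) = measure_pmf.prob (pair_pmf A B) ((E1 \<times> E2) \<inter> set_pmf (pair_pmf A B))"
    by (rule measure_Int_set_pmf[symmetric])
  also have "(E1 \<times> E2) \<inter> set_pmf (pair_pmf A B) = (E1 \<inter> set_pmf A) \<times> (E2 \<inter> set_pmf B)" by auto
  also have "measure_pmf.prob (pair_pmf A B) \<dots> = measure_pmf.prob A (E1 \<inter> set_pmf A) * measure_pmf.prob B (E2 \<inter> set_pmf B)"
    by (rule measure_pmf_prob_product) (auto intro: countable_subset[OF _ countable_set_pmf])
  finally show ?thesis by (simp add: measure_Int_set_pmf)
qed

lemma indep_local:
  fixes P :: "'a \<Rightarrow> 'b pmf" and E1 E2 :: "('a \<Rightarrow> 'b) set"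
  assumes fin: "finite A" and s1: "Wa \<subseteq> A" and s2: "Wb \<subseteq> A" and dj: "Wa \<inter> Wb = {}"
  and l1: "\<And>c c'. (\<And>j. j \<in> Wa \<Longrightarrow> c j = c' j) \<Longrightarrow> c \<in> E1 \<Longrightarrow> c' \<in> E1"
  and l2: "\<And>c c'. (\<And>j. j \<in> Wb \<Longrightarrow> c j = c' j) \<Longrightarrow> c \<in> E2 \<Longrightarrow> c' \<in> E2"
  shows "measure_pmf.prob (Pi_pmf A d P) (E1 \<inter> E2) =
         measure_pmf.prob (Pi_pmf A d P) E1 * measure_pmf.prob (Pi_pmf A d P) E2"
proof -
  define Q where "Q = pair_pmf (Pi_pmf Wa d P) (Pi_pmf (A - Wa) d P)"
  define h :: "('a \<Rightarrow> 'b) \<times> ('a \<Rightarrow> 'b) \<Rightarrow> 'a \<Rightarrow> 'b" where "h = (\<lambda>(f,g) x. if x \<in> Wa then f x else g x)"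
  have fin1: "finite Wa" using fin s1 finite_subset by blast
  have "Pi_pmf A d P = Pi_pmf (Wa \<union> (A - Wa)) d P" using s1 by (simp add: Un_absorb1 Un_Diff_cancel)
  also have "\<dots> = map_pmf h Q" unfolding Q_def h_def
    by (rule Pi_pmf_union) (use fin fin1 in auto)
  finally have eq: "Pi_pmf A d P = map_pmf h Q" .
  have h1: "h (f, g) \<in> E1 \<longleftrightarrow> f \<in> E1" for f g
    using l1[of "h (f,g)" f] l1[of f "h (f,g)"] unfolding h_def by auto
  have h2: "h (f, g) \<in> E2 \<longleftrightarrow> g \<in> E2" for f g
  proof -
    have e: "\<And>j. j \<in> Wb \<Longrightarrow> h (f,g) j = g j" using dj unfolding h_def by auto
    show ?thesis using l2[of "h (f,g)" g] l2[of g "h (f,g)"] e by metis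
  qed
  have p1: "h -` E1 = E1 \<times> UNIV" using h1 by auto
  have p2: "h -` E2 = UNIV \<times> E2" using h2 by auto
  have p12: "h -` (E1 \<inter> E2) = E1 \<times> E2" using h1 h2 by auto
  show ?thesis unfolding eq measure_map_pmf p1 p2 p12 Q_def pair_prob by simp
qed

definition rr :: "real \<Rightarrow> bool \<Rightarrow> real" where "rr p b = (if b then p else 1 - p)"

lemma prob_point:
  assumes "0 \<le> p" "p \<le> 1" "a < n"
  shows "measure_pmf.prob (random_coloring p n) {c. c a = v} = rr p v"
proof -
  have "measure_pmf.prob (random_coloring p n) {c. c a = v} =
        measure_pmf.prob (map_pmf (\<lambda>f. f a) (random_coloring p n)) {v}"
    by (simp add: vimage_def)
  also have "map_pmf (\<lambda>f. f a) (random_coloring p n) = bernoulli_pmf p"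
    unfolding random_coloring_def using assms by (subst Pi_pmf_component) auto
  finally show ?thesis using assms by (cases v) (simp_all add: rr_def measure_pmf_single)
qed

lemma prob_two:
  assumes "0 \<le> p" "p \<le> 1" "a < n" "b < n" "a \<noteq> b"
  shows "measure_pmf.prob (random_coloring p n) {c. c a = v \<and> c b = w} = rr p v * rr p w"
proof -
  have "measure_pmf.prob (random_coloring p n) ({c. c a = v} \<inter> {c. c b = w}) =
       measure_pmf.prob (random_coloring p n) {c. c a = v} * measure_pmf.prob (random_coloring p n) {c. c b = w}"
    unfolding random_coloring_def
    by (rule indep_local[where Wa="{a}" and Wb="{b}"]) (use assms in auto)
  then show ?thesis using prob_point assms by (simp add: Int_def)
qed

lemma nd_inj_close: "n > 0 \<Longrightarrow> nd n a = nd n b \<Longrightarrow> \<bar>a - b\<bar> < int n \<Longrightarrow> a = b"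
proof -
  assume n: "n > 0" and e: "nd n a = nd n b" and d: "\<bar>a - b\<bar> < int n"
  have "a mod int n = b mod int n" using e nd_eq_iff[OF n] by simp
  then have "int n dvd a - b" by (simp add: mod_eq_dvd_iff)
  then obtain k where k: "a - b = int n * k" by (auto simp: dvd_def)
  have "k = 0"
  proof (rule ccontr)
    assume "k \<noteq> 0"
    then have "\<bar>k\<bar> \<ge> 1" by linarith
    then have "int n * \<bar>k\<bar> \<ge> int n * 1" by (intro mult_left_mono) auto
    then have "\<bar>int n * k\<bar> \<ge> int n" by (simp add: abs_mult)
    then show False using d k by simp
  qed
  then show ?thesis using k by simp
qed

lemma altw_pattern: "altw x z l \<Longrightarrow> k \<le> l \<Longrightarrow> x (z - int k) = (x z \<noteq> odd k) \<and> x (z + int k) = (x z \<noteq> odd k)"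
proof (induction k)
  case 0 then show ?case by simp
next
  case (Suc k)
  then have IH: "x (z - int k) = (x z \<noteq> odd k) \<and> x (z + int k) = (x z \<noteq> odd k)" by simp
  have "x (z - int k) \<noteq> x (z - int k - 1) \<and> x (z + int k) \<noteq> x (z + int k + 1)"
    using Suc.prems by (auto simp: altw_def)
  then show ?case using IH by (auto simp: algebra_simps)
qed

fun gg :: "real \<Rightarrow> bool \<Rightarrow> nat \<Rightarrow> real" where
  "gg p b 0 = rr p b"
| "gg p b (Suc l) = gg p b l * (rr p (b \<noteq> odd (Suc l)))^2"

definition Ev :: "nat \<Rightarrow> int \<Rightarrow> bool \<Rightarrow> nat \<Rightarrow> (nat \<Rightarrow> bool) set" where
  "Ev n z b l = {c. c (nd n z) = b \<and> altw (lift n c) z l}"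

lemma altw_local: "(\<And>w. \<bar>w - z\<bar> \<le> int l \<Longrightarrow> x w = y w) \<Longrightarrow> altw x z l \<Longrightarrow> altw y z l"
proof -
  assume h: "\<And>w. \<bar>w - z\<bar> \<le> int l \<Longrightarrow> x w = y w" and a: "altw x z l"
  show ?thesis unfolding altw_def
  proof (intro allI impI)
    fix k assume k: "k < l"
    have "x (z - int k) = y (z - int k)" "x (z - int k - 1) = y (z - int k - 1)"
      "x (z + int k) = y (z + int k)" "x (z + int k + 1) = y (z + int k + 1)"
      using k by (auto intro!: h)
    then show "y (z - int k) \<noteq> y (z - int k - 1) \<and> y (z + int k) \<noteq> y (z + int k + 1)"
      using a k by (auto simp: altw_def)
  qed
qed

lemma prob_Ev:
  assumes p: "0 \<le> p" "p \<le> 1" and n: "2 * l + 1 \<le> n"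
  shows "measure_pmf.prob (random_coloring p n) (Ev n z b l) = gg p b l"
  using n
proof (induction l)
  case 0
  have "Ev n z b 0 = {c. c (nd n z) = b}" by (auto simp: Ev_def altw_def)
  then show ?case using prob_point[OF p, of "nd n z" n b] nd_lt[of n z] 0 by simp
next
  case (Suc l)
  have n0: "n > 0" using Suc by simp
  define v where "v = (b \<noteq> odd (Suc l))"
  define a1 where "a1 = nd n (z - int l - 1)"
  define a2 where "a2 = nd n (z + int l + 1)"
  define W where "W = nd n ` {z - int l .. z + int l}"
  have ev: "Ev n z b (Suc l) = Ev n z b l \<inter> {c. c a1 = v \<and> c a2 = v}"
  proof (intro set_eqI iffI)
    fix c assume "c \<in> Ev n z b (Suc l)"
    then have c: "c (nd n z) = b" "altw (lift n c) z (Suc l)" by (auto simp: Ev_def)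
    have "altw (lift n c) z l" using c altw_mono by (metis le_SucI order_refl)
    then have "lift n c (z - int l) = (b \<noteq> odd l)" "lift n c (z + int l) = (b \<noteq> odd l)"
      using altw_pattern[of "lift n c" z l l] c by (auto simp: lift_def)
    moreover have "lift n c (z - int l) \<noteq> lift n c (z - int l - 1)" "lift n c (z + int l) \<noteq> lift n c (z + int l + 1)"
      using c(2) by (auto simp: altw_Suc)
    ultimately show "c \<in> Ev n z b l \<inter> {c. c a1 = v \<and> c a2 = v}"
      using c \<open>altw (lift n c) z l\<close> unfolding Ev_def a1_def a2_def v_def lift_def by auto
  next
    fix c assume "c \<in> Ev n z b l \<inter> {c. c a1 = v \<and> c a2 = v}"
    then have c: "c (nd n z) = b" "altw (lift n c) z l" "c a1 = v" "c a2 = v" by (auto simp: Ev_def)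
    then have "lift n c (z - int l) = (b \<noteq> odd l)" "lift n c (z + int l) = (b \<noteq> odd l)"
      using altw_pattern[of "lift n c" z l l] c by (auto simp: lift_def)
    then show "c \<in> Ev n z b (Suc l)" using c unfolding Ev_def a1_def a2_def v_def lift_def
      by (auto simp: altw_Suc lift_def)
  qed
  have a1W: "a1 \<notin> W"
  proof
    assume "a1 \<in> W"
    then obtain w where w: "w \<in> {z - int l .. z + int l}" "nd n w = a1" unfolding W_def by auto
    then have "w = z - int l - 1" using nd_inj_close[OF n0, of w "z - int l - 1"] Suc.prems unfolding a1_def by auto
    then show False using w by simp
  qed
  have a2W: "a2 \<notin> W"
  proof
    assume "a2 \<in> W"
    then obtain w where w: "w \<in> {z - int l .. z + int l}" "nd n w = a2" unfolding W_def by auto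
    then have "w = z + int l + 1" using nd_inj_close[OF n0, of w "z + int l + 1"] Suc.prems unfolding a2_def by auto
    then show False using w by simp
  qed
  have a12: "a1 \<noteq> a2"
  proof
    assume "a1 = a2"
    then have "z - int l - 1 = z + int l + 1" using nd_inj_close[OF n0, of "z - int l - 1" "z + int l + 1"] Suc.prems
      unfolding a1_def a2_def by auto
    then show False by simp
  qed
  have "measure_pmf.prob (random_coloring p n) (Ev n z b l \<inter> {c. c a1 = v \<and> c a2 = v}) =
        measure_pmf.prob (random_coloring p n) (Ev n z b l) * measure_pmf.prob (random_coloring p n) {c. c a1 = v \<and> c a2 = v}"
    unfolding random_coloring_def
  proof (rule indep_local[where Wa=W and Wb="{a1,a2}"])
    show "W \<subseteq> {..<n}" unfolding W_def using nd_lt[OF n0] by auto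
    show "{a1, a2} \<subseteq> {..<n}" unfolding a1_def a2_def using nd_lt[OF n0] by auto
    show "W \<inter> {a1, a2} = {}" using a1W a2W by auto
    fix c c' :: "nat \<Rightarrow> bool"
    assume h: "\<And>j. j \<in> W \<Longrightarrow> c j = c' j" and "c \<in> Ev n z b l"
    then have c: "c (nd n z) = b" "altw (lift n c) z l" by (auto simp: Ev_def)
    have "nd n z \<in> W" unfolding W_def by auto
    then have "c' (nd n z) = b" using h c by auto
    moreover have "altw (lift n c') z l"
    proof (rule altw_local[OF _ c(2)])
      fix w assume "\<bar>w - z\<bar> \<le> int l"
      then have "w \<in> {z - int l .. z + int l}" by auto
      then have "nd n w \<in> W" unfolding W_def by blast
      then show "lift n c w = lift n c' w" unfolding lift_def using h by blast
    qed
    ultimately show "c' \<in> Ev n z b l" by (simp add: Ev_def)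
  next
    fix c c' :: "nat \<Rightarrow> bool"
    assume h: "\<And>j. j \<in> {a1, a2} \<Longrightarrow> c j = c' j" and "c \<in> {c. c a1 = v \<and> c a2 = v}"
    then show "c' \<in> {c. c a1 = v \<and> c a2 = v}" by auto
  qed simp
  also have "measure_pmf.prob (random_coloring p n) {c. c a1 = v \<and> c a2 = v} = rr p v * rr p v"
    by (rule prob_two[OF p]) (use a12 nd_lt[OF n0] in \<open>auto simp: a1_def a2_def\<close>)
  finally show ?case using ev Suc by (simp add: v_def power2_eq_square)
qed


definition Xe :: "nat \<Rightarrow> nat \<Rightarrow> nat \<Rightarrow> (nat \<Rightarrow> bool) set" where
  "Xe n t i = {c. (S ^^ t) (lift n c) (int i)}"

definition Alt :: "nat \<Rightarrow> nat \<Rightarrow> nat \<Rightarrow> (nat \<Rightarrow> bool) set" where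
  "Alt n i l = {c. altw (lift n c) (int i) l}"

fun mus :: "real \<Rightarrow> nat \<Rightarrow> real" where
  "mus p 0 = p"
| "mus p (Suc t) = mus p t - gg p (\<not> odd t) (Suc t) + gg p (odd t) (Suc t)"

lemma prob_Alt:
  assumes p: "0 \<le> p" "p \<le> 1" and n: "2 * l + 1 \<le> n" and i: "i < n"
  shows "measure_pmf.prob (random_coloring p n) (Alt n i l) = gg p True l + gg p False l"
proof -
  have "Alt n i l = Ev n (int i) True l \<union> Ev n (int i) False l"
    unfolding Alt_def Ev_def by auto
  moreover have "Ev n (int i) True l \<inter> Ev n (int i) False l = {}" unfolding Ev_def by auto
  ultimately show ?thesis
    using measure_pmf.finite_measure_Union[of "Ev n (int i) True l" "random_coloring p n" "Ev n (int i) False l"]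
      prob_Ev[OF p n] by simp
qed

lemma prob_Xe:
  assumes p: "0 \<le> p" "p \<le> 1" and n: "2 * t + 1 \<le> n" and i: "i < n"
  shows "measure_pmf.prob (random_coloring p n) (Xe n t i) = mus p t"
  using n
proof (induction t)
  case 0
  have "Xe n 0 i = {c. c i = True}" unfolding Xe_def lift_def using nd_int[OF i] by simp
  then show ?case using prob_point[OF p i, of True] by (simp add: rr_def)
next
  case (Suc t)
  let ?M = "random_coloring p n"
  have ndi: "nd n (int i) = i" using nd_int[OF i] .
  have e1: "Xe n t i \<inter> Alt n i (Suc t) = Ev n (int i) (\<not> odd t) (Suc t)"
    unfolding Xe_def Alt_def Ev_def using S_iter_alt[of "lift n _" "int i" t] ndi
    by (auto simp: lift_def)
  have e2: "Alt n i (Suc t) - Xe n t i = Ev n (int i) (odd t) (Suc t)"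
    unfolding Xe_def Alt_def Ev_def using S_iter_alt[of "lift n _" "int i" t] ndi
    by (auto simp: lift_def)
  have e: "Xe n (Suc t) i = (Xe n t i - Alt n i (Suc t)) \<union> (Alt n i (Suc t) - Xe n t i)"
    unfolding Xe_def Alt_def using S_iter_Suc[of t "lift n _" "int i"] by auto
  have "measure_pmf.prob ?M (Xe n (Suc t) i) =
        measure_pmf.prob ?M (Xe n t i - Alt n i (Suc t)) + measure_pmf.prob ?M (Alt n i (Suc t) - Xe n t i)"
    unfolding e by (rule measure_pmf.finite_measure_Union) auto
  also have "measure_pmf.prob ?M (Xe n t i - Alt n i (Suc t)) = measure_pmf.prob ?M (Xe n t i) - measure_pmf.prob ?M (Xe n t i \<inter> Alt n i (Suc t))"
    by (rule measure_pmf.finite_measure_Diff') auto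
  finally show ?case using Suc e1 e2 prob_Ev[OF p Suc.prems] by simp
qed

lemma rr_nonneg: "0 \<le> p \<Longrightarrow> p \<le> 1 \<Longrightarrow> 0 \<le> rr p b" by (simp add: rr_def)
lemma rr_le1: "0 \<le> p \<Longrightarrow> p \<le> 1 \<Longrightarrow> rr p b \<le> 1" by (simp add: rr_def)

lemma gg_nonneg: "0 \<le> p \<Longrightarrow> p \<le> 1 \<Longrightarrow> 0 \<le> gg p b l"
  by (induction l) (auto simp: rr_nonneg)

lemma gg_le1: "0 \<le> p \<Longrightarrow> p \<le> 1 \<Longrightarrow> gg p b l \<le> 1"
proof (induction l)
  case 0 then show ?case by (simp add: rr_le1)
next
  case (Suc l)
  have "(rr p (b \<noteq> odd (Suc l)))^2 \<le> 1" using rr_le1[OF Suc.prems] rr_nonneg[OF Suc.prems]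
    by (simp add: power_le_one)
  then show ?case using Suc gg_nonneg[OF Suc.prems] by (simp add: mult_le_one rr_nonneg)
qed

lemma gg_SS: "gg p b (Suc (Suc l)) = gg p b l * (p * (1 - p))^2"
proof -
  have "rr p (b \<noteq> odd (Suc l)) * rr p (b \<noteq> odd (Suc (Suc l))) = p * (1 - p)"
    by (cases b; cases "odd l") (auto simp: rr_def)
  then have "(rr p (b \<noteq> odd (Suc l)))^2 * (rr p (b \<noteq> odd (Suc (Suc l))))^2 = (p * (1 - p))^2"
    by (metis power_mult_distrib)
  then show ?thesis by (simp only: gg.simps mult.assoc)
qed

lemma gg_bound: "0 \<le> p \<Longrightarrow> p \<le> 1 \<Longrightarrow> gg p b l \<le> ((p * (1 - p))^2) ^ (l div 2)"
proof (induction l rule: less_induct)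
  case (less l)
  show ?case
  proof (cases l)
    case 0 then show ?thesis using rr_le1[OF less.prems] by simp
  next
    case (Suc l')
    show ?thesis
    proof (cases l')
      case 0 then show ?thesis using gg_le1[OF less.prems, of b l] Suc \<open>l = Suc l'\<close> by (simp del: gg.simps)
    next
      case (Suc l'')
      have "gg p b l'' \<le> ((p * (1 - p))^2) ^ (l'' div 2)" using less \<open>l = Suc l'\<close> Suc by simp
      moreover have "l div 2 = Suc (l'' div 2)" using \<open>l = Suc l'\<close> Suc by simp
      moreover have "gg p b l = gg p b l'' * (p * (1 - p))^2" using \<open>l = Suc l'\<close> Suc gg_SS[of p b l''] by simp
      ultimately show ?thesis
        by (simp del: gg.simps) (metis mult.commute mult_right_mono zero_le_power2)
    qed
  qed
qed

definition dd :: "real \<Rightarrow> nat \<Rightarrow> real" where "dd p t = gg p (odd t) (Suc t) - gg p (\<not> odd t) (Suc t)"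

lemma mus_Suc': "mus p (Suc t) = mus p t + dd p t" by (simp add: dd_def)

lemma dd_SS: "dd p (Suc (Suc t)) = (p * (1 - p))^2 * dd p t"
proof -
  have o: "odd (Suc (Suc t)) = odd t" by simp
  show ?thesis unfolding dd_def o gg_SS by (simp add: algebra_simps)
qed

lemma dd_even: "dd p (2 * M) = ((p * (1 - p))^2)^M * dd p 0"
  by (induction M) (auto simp: dd_SS[of p "2 * _", simplified] )

lemma dd_odd: "dd p (2 * M + 1) = ((p * (1 - p))^2)^M * dd p 1"
  by (induction M) (auto simp: dd_SS[of p "2 * _ + 1", simplified])

lemma mus_even:
  assumes "(p * (1 - p))^2 \<noteq> 1"
  shows "mus p (2 * M) = p + (dd p 0 + dd p 1) * (1 - ((p * (1 - p))^2)^M) / (1 - (p * (1 - p))^2)"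
proof (induction M)
  case 0 then show ?case by simp
next
  case (Suc M)
  have "mus p (2 * Suc M) = mus p (2 * M) + dd p (2 * M) + dd p (2 * M + 1)"
    by (simp add: mus_Suc'[symmetric] del: mus.simps)
  then have "mus p (2 * Suc M) = p + (dd p 0 + dd p 1) * (1 - ((p * (1 - p))^2)^M) / (1 - (p * (1 - p))^2)
      + ((p * (1 - p))^2)^M * dd p 0 + ((p * (1 - p))^2)^M * dd p 1"
    by (simp only: Suc.IH dd_even dd_odd)
  also have "\<dots> = p + (dd p 0 + dd p 1) * (1 - ((p * (1 - p))^2)^Suc M) / (1 - (p * (1 - p))^2)"
  proof -
    have "1 - (p * (1 - p))^2 \<noteq> 0" using assms by simp
    then show ?thesis by (simp add: field_simps)
  qed
  finally show ?case .
qed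


definition muL :: "real \<Rightarrow> real" where "muL p = (2*p^2 - p^3) / (1 - p + p^2)"

lemma pq_bound: "0 \<le> p \<Longrightarrow> p \<le> 1 \<Longrightarrow> 0 \<le> p * (1 - p) \<and> p * (1 - p) \<le> 1/4" for p :: real
proof -
  assume "0 \<le> p" "p \<le> 1"
  have "0 \<le> (p - 1/2)^2" by simp
  then have "p * (1 - p) \<le> 1/4" by (simp add: power2_eq_square algebra_simps)
  then show ?thesis using \<open>0 \<le> p\<close> \<open>p \<le> 1\<close> by simp
qed

lemma s_bound: "0 \<le> p \<Longrightarrow> p \<le> 1 \<Longrightarrow> 0 \<le> (p * (1 - p))^2 \<and> (p * (1 - p))^2 \<le> 1/16" for p :: real
proof -
  assume a: "0 \<le> p" "p \<le> 1"
  have "(p * (1 - p))^2 \<le> (1/4)^2" using pq_bound[OF a] by (intro power_mono) auto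
  then show ?thesis by (simp add: power2_eq_square)
qed

lemma mus_odd: "mus p (2 * M + 1) = mus p (2 * M) + ((p * (1 - p))^2)^M * dd p 0"
  using mus_Suc'[of p "2 * M"] dd_even[of p M] by simp

lemma mus_close:
  assumes p: "0 \<le> p" "p \<le> 1"
  defines "s \<equiv> (p * (1 - p))^2"
  defines "L0 \<equiv> p + (dd p 0 + dd p 1) / (1 - s)"
  shows "\<bar>mus p t - L0\<bar> \<le> (\<bar>dd p 0 + dd p 1\<bar> / (1 - s) + \<bar>dd p 0\<bar>) * s ^ (t div 2)"
proof -
  have s: "0 \<le> s" "s \<le> 1/16" using s_bound[OF p] unfolding s_def by auto
  have s1: "s \<noteq> 1" "1 - s > 0" using s by auto
  obtain M where M: "t = 2 * M \<or> t = 2 * M + 1" by (metis dvd_mult_div_cancel odd_two_times_div_two_succ) 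
  define D where "D = dd p 0 + dd p 1"
  have me: "mus p (2 * M) = p + D * (1 - s ^ M) / (1 - s)"
    using mus_even[of p M] s1 unfolding s_def[symmetric] D_def by simp
  have "mus p (2 * M) - L0 = D * (1 - s ^ M) / (1 - s) - D / (1 - s)"
    unfolding me L0_def D_def by simp
  also have "\<dots> = (D * (1 - s ^ M) - D) / (1 - s)" by (simp add: diff_divide_distrib)
  also have "\<dots> = - (D * s ^ M) / (1 - s)" by (simp add: algebra_simps)
  also have "\<dots> = - (D / (1 - s)) * s ^ M" by simp
  finally have ev: "mus p (2 * M) - L0 = - ((dd p 0 + dd p 1) / (1 - s)) * s ^ M" unfolding D_def .
  have tM: "t div 2 = M" using M by auto
  have sM: "0 \<le> s ^ M" using s by simp
  have e1: "\<bar>mus p (2 * M) - L0\<bar> \<le> \<bar>dd p 0 + dd p 1\<bar> / (1 - s) * s ^ M"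
    unfolding ev using s1 sM by (simp add: abs_mult abs_divide)
  show ?thesis
  proof (cases "t = 2 * M")
    case True
    then show ?thesis using e1 tM sM by (simp add: distrib_right add_increasing2 mult_nonneg_nonneg)
  next
    case False
    then have t: "t = 2 * M + 1" using M by simp
    have "\<bar>mus p t - L0\<bar> \<le> \<bar>mus p (2 * M) - L0\<bar> + \<bar>s ^ M * dd p 0\<bar>"
      unfolding t mus_odd s_def[symmetric] by linarith
    also have "\<bar>s ^ M * dd p 0\<bar> = \<bar>dd p 0\<bar> * s ^ M" using sM by (simp add: abs_mult)
    finally show ?thesis using e1 tM by (simp add: distrib_right)
  qed
qed

lemma L0_eq:
  assumes p: "0 \<le> p" "p \<le> 1"
  shows "p + (dd p 0 + dd p 1) / (1 - (p * (1 - p))^2) = muL p"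
proof -
  have d0: "dd p 0 = (1 - p) * p^2 - p * (1 - p)^2" by (simp add: dd_def rr_def)
  have d1: "dd p 1 = p * (1 - p)^2 * p^2 - (1 - p) * p^2 * (1 - p)^2"
    by (simp add: dd_def rr_def numeral_2_eq_2)
  have a: "1 - p + p^2 > 0"
  proof -
    have "0 \<le> (p - 1/2)^2" by simp
    then show ?thesis by (simp add: power2_eq_square algebra_simps)
  qed
  have b: "1 - (p * (1 - p))^2 > 0" using s_bound[OF p] by simp
  have c: "1 + p * (1 - p) > 0" using pq_bound[OF p] by simp
  have f: "1 - (p * (1 - p))^2 = (1 - p + p^2) * (1 + p * (1 - p))"
    by (simp add: power2_eq_square algebra_simps)
  define N where "N = (2*p^2 - p^3) - p * (1 - p + p^2)"
  have num: "(1 - p) * p^2 - p * (1 - p)^2 + (p * (1 - p)^2 * p^2 - (1 - p) * p^2 * (1 - p)^2) = N * (1 + p * (1 - p))"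
    unfolding N_def by (simp add: algebra_simps power2_eq_square power3_eq_cube)
  have "p + (dd p 0 + dd p 1) / (1 - (p * (1 - p))^2) = p + N * (1 + p * (1 - p)) / ((1 - p + p^2) * (1 + p * (1 - p)))"
    unfolding d0 d1 f num by simp
  also have "\<dots> = p + N / (1 - p + p^2)" using c by simp
  also have "\<dots> = (p * (1 - p + p^2) + N) / (1 - p + p^2)" using a by (simp add: field_simps)
  also have "\<dots> = muL p" unfolding muL_def N_def by simp
  finally show ?thesis .
qed

lemma mus_tendsto:
  assumes p: "0 \<le> p" "p \<le> 1"
  shows "mus p \<longlonglongrightarrow> muL p"
proof -
  define s where "s = (p * (1 - p))^2"
  define K where "K = \<bar>dd p 0 + dd p 1\<bar> / (1 - s) + \<bar>dd p 0\<bar>"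
  have s: "0 \<le> s" "s < 1" using s_bound[OF p] unfolding s_def by auto
  have lim1: "filterlim (\<lambda>t::nat. t div 2) sequentially sequentially"
    unfolding filterlim_at_top eventually_sequentially
  proof
    fix Z :: nat show "\<exists>N. \<forall>n\<ge>N. Z \<le> n div 2" by (rule exI[of _ "2 * Z"]) auto
  qed
  have "(\<lambda>t. s ^ t) \<longlonglongrightarrow> 0" using s by (intro LIMSEQ_power_zero) auto
  then have "(\<lambda>t. s ^ (t div 2)) \<longlonglongrightarrow> 0" using filterlim_compose lim1 by blast
  then have "(\<lambda>t. K * s ^ (t div 2)) \<longlonglongrightarrow> 0" by (auto intro: tendsto_mult_right_zero)
  then have "(\<lambda>t. mus p t - muL p) \<longlonglongrightarrow> 0"
    by (rule Lim_null_comparison[rotated]) (use mus_close[OF p] L0_eq[OF p] in \<open>auto simp: K_def s_def\<close>)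
  then show ?thesis by (simp add: LIM_zero_iff)
qed


definition Wd :: "nat \<Rightarrow> nat \<Rightarrow> nat \<Rightarrow> nat set" where
  "Wd n i t = nd n ` {int i - int t .. int i + int t}"

lemma Xe_local:
  assumes "c \<in> Xe n t i" "\<And>j. j \<in> Wd n i t \<Longrightarrow> c j = c' j"
  shows "c' \<in> Xe n t i"
proof -
  have "(S ^^ t) (lift n c) (int i) = (S ^^ t) (lift n c') (int i)"
  proof (rule S_local, intro allI impI)
    fix w assume "\<bar>w - int i\<bar> \<le> int t"
    then have "w \<in> {int i - int t .. int i + int t}" by auto
    then have "nd n w \<in> Wd n i t" unfolding Wd_def by blast
    then show "lift n c w = lift n c' w" unfolding lift_def using assms(2) by blast
  qed
  then show ?thesis using assms(1) by (simp add: Xe_def)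
qed

lemma Wd_sub: "n > 0 \<Longrightarrow> Wd n i t \<subseteq> {..<n}"
  unfolding Wd_def using nd_lt by auto

lemma Wd_disj:
  assumes n: "n > 0" and j: "j < n" and nj: "j \<notin> nd n ` {int i - 2 * int t .. int i + 2 * int t}"
  shows "Wd n i t \<inter> Wd n j t = {}"
proof (rule ccontr)
  assume "Wd n i t \<inter> Wd n j t \<noteq> {}"
  then obtain x where x: "x \<in> Wd n i t" "x \<in> Wd n j t" by blast
  then obtain w1 where w1: "w1 \<in> {int i - int t .. int i + int t}" "x = nd n w1" unfolding Wd_def by blast
  obtain w2 where w2: "w2 \<in> {int j - int t .. int j + int t}" "x = nd n w2" using x unfolding Wd_def by blast
  have w: "w1 \<in> {int i - int t .. int i + int t}" "w2 \<in> {int j - int t .. int j + int t}"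
    "nd n w1 = nd n w2" using w1 w2 by auto
  then have "w1 mod int n = w2 mod int n" using nd_eq_iff[OF n] by simp
  then have "int n dvd w1 - w2" by (simp add: mod_eq_dvd_iff)
  then obtain k where k: "w1 - w2 = int n * k" by (auto simp: dvd_def)
  have "nd n (int j + (w1 - w2)) = nd n (int j)"
    unfolding nd_eq_iff[OF n] k by simp
  then have "nd n (int j + (w1 - w2)) = j" using nd_int[OF j] by simp
  moreover have "int j + (w1 - w2) \<in> {int i - 2 * int t .. int i + 2 * int t}" using w by auto
  ultimately show False using nj by force
qed

lemma card_near: "card (nd n ` {int i - 2 * int t .. int i + 2 * int t}) \<le> 4 * t + 1"
proof -
  have "card (nd n ` {int i - 2 * int t .. int i + 2 * int t}) \<le> card {int i - 2 * int t .. int i + 2 * int t}"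
    by (rule card_image_le) simp
  also have "\<dots> = 4 * t + 1" by simp
  finally show ?thesis .
qed

lemma fin_rc: "finite (set_pmf (random_coloring p n))"
proof -
  have "set_pmf (random_coloring p n) \<subseteq> PiE_dflt {..<n} False (set_pmf \<circ> (\<lambda>_. bernoulli_pmf p))"
    unfolding random_coloring_def by (rule set_Pi_pmf_subset') simp
  moreover have "finite (PiE_dflt {..<n} False (set_pmf \<circ> (\<lambda>_. bernoulli_pmf p)))" by auto
  ultimately show ?thesis by (rule finite_subset)
qed

lemma integrable_rc [simp]: "integrable (measure_pmf (random_coloring p n)) (f :: _ \<Rightarrow> real)"
  by (rule integrable_measure_pmf_finite[OF fin_rc])

definition Zc :: "nat \<Rightarrow> nat \<Rightarrow> (nat \<Rightarrow> bool) \<Rightarrow> real" where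
  "Zc n t c = (\<Sum>i<n. indicator (Xe n t i) c)"

lemma exp_Zc:
  assumes p: "0 \<le> p" "p \<le> 1" and n: "2 * t + 1 \<le> n"
  shows "measure_pmf.expectation (random_coloring p n) (Zc n t) = real n * mus p t"
proof -
  have "measure_pmf.expectation (random_coloring p n) (Zc n t) =
        (\<Sum>i<n. measure_pmf.expectation (random_coloring p n) (indicator (Xe n t i)))"
    unfolding Zc_def by (simp add: integral_sum)
  also have "\<dots> = (\<Sum>i<n. mus p t)" using prob_Xe[OF p n] by simp
  finally show ?thesis by simp
qed

lemma var_Zc:
  assumes p: "0 \<le> p" "p \<le> 1" and n: "2 * t + 1 \<le> n"
  shows "measure_pmf.variance (random_coloring p n) (Zc n t) \<le> real n * (4 * t + 1)"
proof -
  let ?M = "random_coloring p n"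
  let ?P = "\<lambda>A. measure_pmf.prob ?M A"
  have n0: "n > 0" using n by simp
  have sq: "(Zc n t c)^2 = (\<Sum>i<n. \<Sum>j<n. indicator (Xe n t i \<inter> Xe n t j) c)" for c
    unfolding Zc_def power2_eq_square sum_product by (simp add: indicator_inter_arith)
  have e2: "measure_pmf.expectation ?M (\<lambda>c. (Zc n t c)^2) = (\<Sum>i<n. \<Sum>j<n. ?P (Xe n t i \<inter> Xe n t j))"
    unfolding sq by (simp add: integral_sum)
  have e1: "(measure_pmf.expectation ?M (Zc n t))^2 = (\<Sum>i<n. \<Sum>j<n. ?P (Xe n t i) * ?P (Xe n t j))"
    unfolding exp_Zc[OF p n] using prob_Xe[OF p n] by (simp add: power2_eq_square)
  have v: "measure_pmf.variance ?M (Zc n t) = (\<Sum>i<n. \<Sum>j<n. ?P (Xe n t i \<inter> Xe n t j) - ?P (Xe n t i) * ?P (Xe n t j))"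
    by (subst measure_pmf.variance_eq) (simp_all add: e1 e2 sum_subtractf)
  have row: "(\<Sum>j<n. ?P (Xe n t i \<inter> Xe n t j) - ?P (Xe n t i) * ?P (Xe n t j)) \<le> 4 * t + 1" if i: "i < n" for i
  proof -
    define N where "N = nd n ` {int i - 2 * int t .. int i + 2 * int t}"
    have b: "?P (Xe n t i \<inter> Xe n t j) - ?P (Xe n t i) * ?P (Xe n t j) \<le> indicator N j" if j: "j < n" for j
    proof (cases "j \<in> N")
      case True
      have "?P (Xe n t i \<inter> Xe n t j) \<le> 1" by simp
      moreover have "0 \<le> ?P (Xe n t i) * ?P (Xe n t j)" by simp
      ultimately have "?P (Xe n t i \<inter> Xe n t j) - ?P (Xe n t i) * ?P (Xe n t j) \<le> 1" by linarith
      then show ?thesis using True by simp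
    next
      case False
      have "?P (Xe n t i \<inter> Xe n t j) = ?P (Xe n t i) * ?P (Xe n t j)"
        unfolding random_coloring_def
        by (rule indep_local[where Wa="Wd n i t" and Wb="Wd n j t"])
           (use Wd_sub[OF n0] Wd_disj[OF n0 j False[unfolded N_def]] Xe_local in auto)
      then show ?thesis using False by simp
    qed
    have "(\<Sum>j<n. ?P (Xe n t i \<inter> Xe n t j) - ?P (Xe n t i) * ?P (Xe n t j)) \<le> (\<Sum>j<n. indicator N j)"
      by (rule sum_mono) (use b in auto)
    also have "(\<Sum>j<n. indicator N j :: real) = real (card ({..<n} \<inter> N))"
      by (simp add: indicator_def sum.If_cases)
    also have "card ({..<n} \<inter> N) \<le> card N" by (rule card_mono) (auto simp: N_def)
    also have "card N \<le> 4 * t + 1" unfolding N_def by (rule card_near)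
    finally show ?thesis by simp
  qed
  have "measure_pmf.variance ?M (Zc n t) \<le> (\<Sum>i<n. real (4 * t + 1))"
    unfolding v by (rule sum_mono) (use row in auto)
  then show ?thesis by simp
qed

lemma cheb_Zc:
  assumes p: "0 \<le> p" "p \<le> 1" and n: "2 * t + 1 \<le> n" and a: "a > 0"
  shows "measure_pmf.prob (random_coloring p n) {c. \<bar>Zc n t c - real n * mus p t\<bar> \<ge> a} \<le> real n * (4 * t + 1) / a^2"
proof -
  have "measure_pmf.prob (random_coloring p n) {c \<in> space (measure_pmf (random_coloring p n)).
      \<bar>Zc n t c - measure_pmf.expectation (random_coloring p n) (Zc n t)\<bar> \<ge> a}
     \<le> measure_pmf.variance (random_coloring p n) (Zc n t) / a^2"
    by (rule measure_pmf.Chebyshev_inequality) (simp_all add: a)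
  also have "\<dots> \<le> real n * (4 * t + 1) / a^2"
    by (rule divide_right_mono) (use var_Zc[OF p n] in auto)
  finally show ?thesis using exp_Zc[OF p n] by simp
qed


lemma num_blue_Zc: "n \<ge> 3 \<Longrightarrow> real (num_blue n ((mm_step n ^^ t) c)) = Zc n t c"
proof -
  assume n: "n \<ge> 3"
  have "real (num_blue n ((mm_step n ^^ t) c)) = real (card {i. i < n \<and> (S ^^ t) (lift n c) (int i)})"
    using num_blue_iter[OF n] by simp
  also have "{i. i < n \<and> (S ^^ t) (lift n c) (int i)} = {i \<in> {..<n}. c \<in> Xe n t i}"
    unfolding Xe_def by auto
  also have "real (card \<dots>) = Zc n t c"
    unfolding Zc_def by (simp add: indicator_def sum.If_cases Collect_conj_eq lessThan_def)
  finally show ?thesis .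
qed

lemma good_prob:
  fixes p \<epsilon> \<delta> :: real
  assumes p: "0 \<le> p" "p \<le> 1" and d: "\<delta> > 0" and n: "3 \<le> n" "2 * T + 3 \<le> n"
    and mu: "\<bar>mus p T - muL p\<bar> \<le> \<delta>" and e: "2 * \<delta> \<le> \<epsilon> * muL p" and Tl: "real T \<le> C * ln (real n)"
  shows "1 - real n * (gg p True (Suc T) + gg p False (Suc T)) - real n * (4 * T + 1) / (\<delta> * real n)^2 \<le>
    measure_pmf.prob (random_coloring p n)
            {c. \<exists>t::nat. real t \<le> C * ln (real n)
                 \<and> mm_stable n ((mm_step n ^^ t) c)
                 \<and> (1 - \<epsilon>) * ((2*p^2 - p^3) / (1 - p + p^2)) * real n \<le> real (num_blue n ((mm_step n ^^ t) c))
                 \<and> real (num_blue n ((mm_step n ^^ t) c)) \<le> (1 + \<epsilon>) * ((2*p^2 - p^3) / (1 - p + p^2)) * real n}"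
    (is "_ \<le> measure_pmf.prob ?M ?G")
proof -
  define B1 where "B1 = (\<Union>i\<in>{..<n}. Alt n i (Suc T))"
  define B2 where "B2 = {c. \<bar>Zc n T c - real n * mus p T\<bar> \<ge> \<delta> * real n}"
  have n0: "real n > 0" using n by simp
  have sub: "UNIV - (B1 \<union> B2) \<subseteq> ?G"
  proof
    fix c assume c: "c \<in> UNIV - (B1 \<union> B2)"
    have st: "\<forall>i<n. \<not> altw (lift n c) (int i) (Suc T)" using c unfolding B1_def Alt_def by auto
    have z: "\<bar>Zc n T c - real n * mus p T\<bar> < \<delta> * real n" using c unfolding B2_def by auto
    have "\<bar>real n * mus p T - real n * muL p\<bar> = real n * \<bar>mus p T - muL p\<bar>"
      by (metis abs_of_nonneg of_nat_0_le_iff right_diff_distrib abs_mult)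
    also have "\<dots> \<le> real n * \<delta>" using mu by (simp add: mult_left_mono)
    finally have a: "\<bar>real n * mus p T - real n * muL p\<bar> \<le> \<delta> * real n" by (simp add: mult.commute)
    have tri: "\<bar>Zc n T c - real n * muL p\<bar> \<le> \<bar>Zc n T c - real n * mus p T\<bar> + \<bar>real n * mus p T - real n * muL p\<bar>"
      using abs_triangle_ineq[of "Zc n T c - real n * mus p T" "real n * mus p T - real n * muL p"] by simp
    have "\<bar>Zc n T c - real n * muL p\<bar> < 2 * \<delta> * real n" using tri a z by linarith
    also have "\<dots> \<le> \<epsilon> * muL p * real n" using e n0 by (simp add: mult_right_mono)
    finally have zz: "\<bar>Zc n T c - real n * muL p\<bar> < \<epsilon> * muL p * real n" .
    have nb: "real (num_blue n ((mm_step n ^^ T) c)) = Zc n T c" by (rule num_blue_Zc[OF n(1)])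
    show "c \<in> ?G"
    proof (intro CollectI exI[of _ T] conjI)
      show "real T \<le> C * ln (real n)" by (rule Tl)
      show "mm_stable n ((mm_step n ^^ T) c)" by (rule mm_stable_final[OF n(1) st])
      show "(1 - \<epsilon>) * ((2*p^2 - p^3) / (1 - p + p^2)) * real n \<le> real (num_blue n ((mm_step n ^^ T) c))"
        using zz unfolding nb muL_def[symmetric] by (simp add: algebra_simps)
      show "real (num_blue n ((mm_step n ^^ T) c)) \<le> (1 + \<epsilon>) * ((2*p^2 - p^3) / (1 - p + p^2)) * real n"
        using zz unfolding nb muL_def[symmetric] by (simp add: algebra_simps)
    qed
  qed
  have pB1: "measure_pmf.prob ?M B1 \<le> real n * (gg p True (Suc T) + gg p False (Suc T))"
  proof -
    have "measure_pmf.prob ?M B1 \<le> (\<Sum>i\<in>{..<n}. measure_pmf.prob ?M (Alt n i (Suc T)))"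
      unfolding B1_def by (rule measure_pmf.finite_measure_subadditive_finite) auto
    also have "\<dots> = (\<Sum>i\<in>{..<n}. gg p True (Suc T) + gg p False (Suc T))"
      by (rule sum.cong) (use prob_Alt[OF p] n in auto)
    finally show ?thesis by simp
  qed
  have pB2: "measure_pmf.prob ?M B2 \<le> real n * (4 * T + 1) / (\<delta> * real n)^2"
    unfolding B2_def by (rule cheb_Zc[OF p]) (use n d n0 in auto)
  have "measure_pmf.prob ?M (B1 \<union> B2) \<le> measure_pmf.prob ?M B1 + measure_pmf.prob ?M B2"
    by (rule measure_Un_le) auto
  moreover have "measure_pmf.prob ?M (UNIV - (B1 \<union> B2)) = 1 - measure_pmf.prob ?M (B1 \<union> B2)"
    using measure_pmf.prob_compl[of "B1 \<union> B2" ?M] by simp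
  moreover have "measure_pmf.prob ?M (UNIV - (B1 \<union> B2)) \<le> measure_pmf.prob ?M ?G"
    by (rule measure_pmf.finite_measure_mono[OF sub]) simp
  ultimately show ?thesis using pB1 pB2 by linarith
qed


lemma gg_T_bound:
  assumes p: "0 \<le> p" "p \<le> 1" and n: "n \<ge> 1"
  shows "gg p b (Suc (nat \<lfloor>2 * ln (real n)\<rfloor>)) \<le> 3 / (real n)^2"
proof -
  define T where "T = nat \<lfloor>2 * ln (real n)\<rfloor>"
  define k where "k = Suc T div 2"
  have lnpos: "0 \<le> ln (real n)" using n by simp
  have T1: "real T \<ge> 2 * ln (real n) - 1" unfolding T_def using lnpos by linarith
  have "gg p b (Suc T) \<le> ((p * (1 - p))^2) ^ k" unfolding k_def by (rule gg_bound[OF p])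
  also have "\<dots> \<le> (1/16) ^ k" using s_bound[OF p] by (intro power_mono) auto
  also have "(1/16::real) ^ k = 1 / 4 ^ (2 * k)" by (simp add: power_mult power_one_over)
  also have "\<dots> \<le> 1 / 4 ^ T"
    by (rule divide_left_mono) (auto simp: k_def intro!: power_increasing)
  also have "(4::real) ^ T \<ge> exp (real T)"
  proof -
    have "exp (real T) = exp 1 ^ T" by (simp add: exp_of_nat_mult[symmetric])
    also have "\<dots> \<le> 4 ^ T" using exp_le by (intro power_mono) auto
    finally show ?thesis .
  qed
  then have "1 / 4 ^ T \<le> 1 / exp (real T)" by (intro divide_left_mono) auto
  also have "exp (real T) \<ge> exp (2 * ln (real n) - 1)" using T1 by simp
  then have "1 / exp (real T) \<le> 1 / exp (2 * ln (real n) - 1)" by (intro divide_left_mono) auto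
  also have "exp (2 * ln (real n) - 1) = (real n)^2 / exp 1"
  proof -
    have "exp (real 2 * ln (real n)) = exp (ln (real n))^2" by (rule exp_of_nat_mult)
    then have "exp (2 * ln (real n)) = (real n)^2" using n by simp
    then show ?thesis by (simp add: exp_diff)
  qed
  also have "1 / ((real n)^2 / exp 1) \<le> 3 / (real n)^2"
    using exp_le n by (simp add: divide_right_mono)
  finally show ?thesis unfolding T_def by simp
qed

theorem theorem4p1:
  fixes p \<epsilon> :: real
  assumes "1/2 \<le> p" and "p \<le> 1" and "\<epsilon> > 0"
  shows "\<exists>C>0. (\<lambda>n. measure_pmf.prob (random_coloring p n)
            {c. \<exists>t::nat. real t \<le> C * ln (real n)
                 \<and> mm_stable n ((mm_step n ^^ t) c)
                 \<and> (1 - \<epsilon>) * ((2*p^2 - p^3) / (1 - p + p^2)) * real n \<le> real (num_blue n ((mm_step n ^^ t) c))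
                 \<and> real (num_blue n ((mm_step n ^^ t) c)) \<le> (1 + \<epsilon>) * ((2*p^2 - p^3) / (1 - p + p^2)) * real n})
          \<longlonglongrightarrow> 1"
proof -
  have p: "0 \<le> p" "p \<le> 1" using assms by auto
  have mupos: "muL p > 0"
  proof -
    have a: "1 - p + p^2 > 0"
    proof -
      have "0 \<le> (p - 1/2)^2" by simp
      then show ?thesis by (simp add: power2_eq_square algebra_simps)
    qed
    have "2*p^2 - p^3 = p^2 * (2 - p)" by (simp add: power2_eq_square power3_eq_cube algebra_simps)
    moreover have "p^2 * (2 - p) > 0" using assms by simp
    ultimately show ?thesis unfolding muL_def using a by simp
  qed
  define \<delta> where "\<delta> = \<epsilon> * muL p / 2"
  have d: "\<delta> > 0" unfolding \<delta>_def using mupos assms by simp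
  define T where "T = (\<lambda>n::nat. nat \<lfloor>2 * ln (real n)\<rfloor>)"
  define g where "g = (\<lambda>n::nat. 1 - 6 / real n - (8 * ln (real n) + 1) / (\<delta>^2 * real n))"
  let ?f = "\<lambda>n. measure_pmf.prob (random_coloring p n)
            {c. \<exists>t::nat. real t \<le> 2 * ln (real n)
                 \<and> mm_stable n ((mm_step n ^^ t) c)
                 \<and> (1 - \<epsilon>) * ((2*p^2 - p^3) / (1 - p + p^2)) * real n \<le> real (num_blue n ((mm_step n ^^ t) c))
                 \<and> real (num_blue n ((mm_step n ^^ t) c)) \<le> (1 + \<epsilon>) * ((2*p^2 - p^3) / (1 - p + p^2)) * real n}"
  have g_lim: "g \<longlonglongrightarrow> 1"
  proof -
    have l1: "(\<lambda>n::nat. 6 / real n) \<longlonglongrightarrow> 0" by real_asymp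
    have l2: "(\<lambda>n::nat. (8 * ln (real n) + 1) / real n) \<longlonglongrightarrow> 0" by real_asymp
    then have "(\<lambda>n::nat. (1 / \<delta>^2) * ((8 * ln (real n) + 1) / real n)) \<longlonglongrightarrow> 0"
      by (rule tendsto_mult_right_zero)
    moreover have "(\<lambda>n::nat. (1 / \<delta>^2) * ((8 * ln (real n) + 1) / real n)) = (\<lambda>n. (8 * ln (real n) + 1) / (\<delta>^2 * real n))"
      by (simp add: field_simps)
    ultimately have l3: "(\<lambda>n::nat. (8 * ln (real n) + 1) / (\<delta>^2 * real n)) \<longlonglongrightarrow> 0" by simp
    have "(\<lambda>n. 1 - 6 / real n - (8 * ln (real n) + 1) / (\<delta>^2 * real n)) \<longlonglongrightarrow> 1 - 0 - 0"
      by (intro tendsto_diff tendsto_const l1 l3)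
    then show ?thesis unfolding g_def by simp
  qed
  have T_lim: "filterlim T sequentially sequentially"
  proof -
    have "filterlim (\<lambda>n::nat. 2 * ln (real n)) at_top sequentially" by real_asymp
    then have "filterlim (\<lambda>n::nat. \<lfloor>2 * ln (real n)\<rfloor>) at_top sequentially"
      by (rule filterlim_compose[OF filterlim_floor_sequentially])
    then show ?thesis unfolding T_def by (rule filterlim_compose[OF filterlim_nat_sequentially])
  qed
  have "(\<lambda>n. mus p (T n)) \<longlonglongrightarrow> muL p"
    by (rule filterlim_compose[OF mus_tendsto[OF p] T_lim])
  then have E3: "eventually (\<lambda>n. \<bar>mus p (T n) - muL p\<bar> < \<delta>) sequentially"
    using tendstoD[OF _ d, of "\<lambda>n. mus p (T n)" "muL p" sequentially] by (simp add: dist_real_def)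
  have E2': "eventually (\<lambda>n::nat. 4 * ln (real n) + 3 \<le> real n) sequentially" by real_asymp
  have E1: "eventually (\<lambda>n::nat. 3 \<le> n) sequentially" by (rule eventually_ge_at_top)
  have ev1: "eventually (\<lambda>n. g n \<le> ?f n) sequentially"
    using E1 E2' E3
  proof eventually_elim
    case (elim n)
    have n1: "n \<ge> 1" using elim by simp
    have rn: "real n > 0" using elim by simp
    have lnpos: "0 \<le> ln (real n)" using n1 by simp
    have Tl: "real (T n) \<le> 2 * ln (real n)" unfolding T_def using lnpos by linarith
    have n2: "2 * T n + 3 \<le> n" using Tl elim by linarith
    have gp: "1 - real n * (gg p True (Suc (T n)) + gg p False (Suc (T n))) - real n * (4 * T n + 1) / (\<delta> * real n)^2 \<le> ?f n"
      by (rule good_prob[OF p d elim(1) n2]) (use elim Tl \<delta>_def in auto)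
    have b1: "real n * (gg p True (Suc (T n)) + gg p False (Suc (T n))) \<le> 6 / real n"
    proof -
      have "gg p True (Suc (T n)) + gg p False (Suc (T n)) \<le> 3 / (real n)^2 + 3 / (real n)^2"
        using gg_T_bound[OF p n1, of True] gg_T_bound[OF p n1, of False] unfolding T_def by linarith
      then have "real n * (gg p True (Suc (T n)) + gg p False (Suc (T n))) \<le> real n * (6 / (real n)^2)"
        using rn by (intro mult_left_mono) auto
      also have "\<dots> = 6 / real n" using rn by (simp add: power2_eq_square)
      finally show ?thesis .
    qed
    have b2: "real n * (4 * T n + 1) / (\<delta> * real n)^2 \<le> (8 * ln (real n) + 1) / (\<delta>^2 * real n)"
    proof -
      have "real n * (4 * T n + 1) / (\<delta> * real n)^2 = (4 * real (T n) + 1) / (\<delta>^2 * real n)"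
        using rn d by (simp add: power2_eq_square field_simps)
      also have "\<dots> \<le> (8 * ln (real n) + 1) / (\<delta>^2 * real n)"
        using Tl rn d by (intro divide_right_mono) auto
      finally show ?thesis .
    qed
    show ?case using gp b1 b2 unfolding g_def by linarith
  qed
  have ev2: "eventually (\<lambda>n. ?f n \<le> 1) sequentially" by simp
  show ?thesis
  proof (intro exI[of _ "2::real"] conjI)
    show "(2::real) > 0" by simp
    show "?f \<longlonglongrightarrow> 1" by (rule tendsto_sandwich[OF ev1 ev2 g_lim tendsto_const])
  qed
qed

end
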